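(* Let $p$ be prime and let $V<W\le\mathbb F_p^k$ be subspaces with $\dim W=\dim V+1$. Let $x\in V^\perp\setminus W^\perp$ satisfy $|x|=\min_{v\in V^\perp\setminus W^\perp}|v|$. Then there is no $y\in V^\perp$ with $y\notin\langle x\rangle$ and $\mathrm{Supp}(y)\subseteq\mathrm{Supp}(x)$.
   Context: For $x\in\mathbb F_p^k$, $\mathrm{Supp}(x)=\{i: x_i\ne0\}$ and $|x|=|\mathrm{Supp}(x)|$. $V^\perp$ is the orthogonal complement under the standard dot product, and $\langle x\rangle$ is the span of $x$. *)

theory Defs
  imports "HOL-Analysis.Analysis"
begin

text \<open>Vectors in F^k are elements of 'a ^ 'n, where 'a is a finite field of prime
  cardinality p (hence isomorphic to F_p) and k = CARD('n).\<close>

definition dotp :: "'a::field ^ 'n \<Rightarrow> 'a ^ 'n \<Rightarrow> 'a" where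
  "dotp x y = (\<Sum>i\<in>UNIV. x $ i * y $ i)"

definition orth :: "('a::field ^ 'n) set \<Rightarrow> ('a ^ 'n) set" where
  "orth V = {y. \<forall>v\<in>V. dotp v y = 0}"

definition supp :: "'a::zero ^ 'n \<Rightarrow> 'n set" where
  "supp x = {i. x $ i \<noteq> 0}"

definition wt :: "'a::zero ^ 'n::finite \<Rightarrow> nat" where
  "wt x = card (supp x)"

end

theory Submission
  imports Defs
begin

lemma orth_diff: "a \<in> orth V \<Longrightarrow> b \<in> orth V \<Longrightarrow> a - b \<in> orth V"
  by (simp add: orth_def dotp_def algebra_simps sum_subtractf)

lemma orth_scale: "a \<in> orth V \<Longrightarrow> c *s a \<in> orth V"
proof -
  assume "a \<in> orth V"
  then show ?thesis
    by (simp add: orth_def dotp_def algebra_simps flip: sum_distrib_left)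
qed

lemma orth_add: "a \<in> orth V \<Longrightarrow> b \<in> orth V \<Longrightarrow> a + b \<in> orth V"
  by (simp add: orth_def dotp_def algebra_simps sum.distrib)

lemma kill:
  fixes x y :: "'a::field ^ 'n::finite"
  assumes "supp y \<subseteq> supp x" "i \<in> supp x"
  shows "supp (y - (y $ i / x $ i) *s x) \<subseteq> supp x - {i}"
  using assms by (auto simp: supp_def)

lemma wt_less:
  fixes x z :: "'a::field ^ 'n::finite"
  assumes "supp z \<subseteq> supp x - {i}" "i \<in> supp x"
  shows "wt z < wt x"
proof -
  have "supp z \<subset> supp x" using assms by blast
  then show ?thesis unfolding wt_def by (simp add: psubset_card_mono)
qed

theorem lemma7p3:
  fixes V W :: "('a::{field,finite} ^ 'n::finite) set" and x :: "'a ^ 'n"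
  assumes "prime (CARD('a))"
    and "vec.subspace V" and "vec.subspace W"
    and "V \<subset> W"
    and "vec.dim W = vec.dim V + 1"
    and "x \<in> orth V - orth W"
    and "\<forall>v \<in> orth V - orth W. wt x \<le> wt v"
  shows "\<not> (\<exists>y \<in> orth V. y \<notin> vec.span {x} \<and> supp y \<subseteq> supp x)"
proof
  assume "\<exists>y \<in> orth V. y \<notin> vec.span {x} \<and> supp y \<subseteq> supp x"
  then obtain y where y: "y \<in> orth V" "y \<notin> vec.span {x}" "supp y \<subseteq> supp x" by blast
  have x: "x \<in> orth V" "x \<notin> orth W" using assms(6) by auto
  have "x \<noteq> 0" using x(2) by (auto simp: orth_def dotp_def)
  then obtain i where i: "i \<in> supp x" unfolding supp_def by (metis (mono_tags) mem_Collect_eq vec_eq_iff zero_index)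
  define z where "z = y - (y $ i / x $ i) *s x"
  have zV: "z \<in> orth V" unfolding z_def using x y by (intro orth_diff orth_scale)
  have zs: "supp z \<subseteq> supp x - {i}" unfolding z_def using kill[OF y(3) i] .
  have "z \<noteq> 0"
  proof
    assume "z = 0"
    then have "y = (y $ i / x $ i) *s x" unfolding z_def by simp
    then have "y \<in> vec.span {x}" by (metis vec.span_base vec.span_scale singletonI)
    then show False using y(2) by simp
  qed
  then obtain j where j: "j \<in> supp z" unfolding supp_def by (metis (mono_tags) mem_Collect_eq vec_eq_iff zero_index)
  show False
  proof (cases "z \<in> orth W")
    case False
    then have "wt x \<le> wt z" using assms(7) zV by auto
    moreover have "wt z < wt x" using wt_less[OF zs i] .
    ultimately show False by simp
  next
    case True
    define u where "u = x - (x $ j / z $ j) *s z"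
    have jx: "j \<in> supp x" using j zs by blast
    have "supp z \<subseteq> supp x" using zs by blast
    have us: "supp u \<subseteq> supp x - {j}" unfolding u_def using j \<open>supp z \<subseteq> supp x\<close>
      by (auto simp: supp_def)
    have uV: "u \<in> orth V" unfolding u_def using x zV by (intro orth_diff orth_scale)
    have "u \<notin> orth W"
    proof
      assume "u \<in> orth W"
      then have "u + (x $ j / z $ j) *s z \<in> orth W" using True by (intro orth_add orth_scale)
      then show False using x(2) unfolding u_def by simp
    qed
    then have "wt x \<le> wt u" using assms(7) uV by auto
    moreover have "wt u < wt x" using wt_less[OF us jx] .
    ultimately show False by simp
  qed
qed

end
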